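(* Consider the two-dimensional Poisson regression model with interaction and $\boldsymbol{\beta}=(\beta_0,\beta_1,\beta_2,\beta_{12})^\top$ with $\beta_0\in\mathbb{R}$, $\beta_1,\beta_2<0$ and $\beta_{12}\le 0$. Let $\rho=-\beta_{12}/(\beta_1\beta_2)$, and let $t=(\sqrt{1+8\rho}-1)/(2\rho)$ if $\beta_{12}<0$ and $t=2$ if $\beta_{12}=0$. Then the design which assigns equal weights $1/4$ to the four settings $\mathbf{x}_0=(0,0)$, $\mathbf{x}_1=(2/|\beta_1|,0)$, $\mathbf{x}_2=(0,2/|\beta_2|)$ and $\mathbf{x}_3=(t/|\beta_1|,t/|\beta_2|)$ is locally $D$-optimal at $\boldsymbol{\beta}$ on $\mathcal{X}=[0,\infty)^2$.
   Context: In the two-dimensional Poisson regression model with interaction, an observation $Y$ at setting $\mathbf{x}=(x_1,x_2)$ is Poisson distributed with mean $\lambda(\mathbf{x})=\exp(\mathbf{f}(\mathbf{x})^\top\boldsymbol{\beta})$, where $\mathbf{f}(\mathbf{x})=(1,x_1,x_2,x_1x_2)^\top$. An (approximate) design $\xi$ on $\mathcal{X}$ is a finite collection of mutually distinct settings $\mathbf{x}_0,\dots,\mathbf{x}_{n-1}\in\mathcal{X}$ with weights $w_i\ge 0$, $\sum_i w_i=1$; its information matrix is $\mathbf{M}_{\boldsymbol{\beta}}(\xi)=\sum_i w_i\lambda(\mathbf{x}_i)\mathbf{f}(\mathbf{x}_i)\mathbf{f}(\mathbf{x}_i)^\top$. A design is locally $D$-optimal at $\boldsymbol{\beta}$ on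 $\mathcal{X}$ if it maximizes $\det\mathbf{M}_{\boldsymbol{\beta}}(\xi)$ over all designs on $\mathcal{X}$. *)

theory Defs
  imports "HOL-Analysis.Analysis"
begin

text \<open>Regression function f(x) = (1, x1, x2, x1 x2) and parameter beta in R^4,
  components indexed 1..4 as (beta0, beta1, beta2, beta12).\<close>

definition regf :: "real \<times> real \<Rightarrow> real ^ 4" where
  "regf x = vector [1, fst x, snd x, fst x * snd x]"

definition intensity :: "real ^ 4 \<Rightarrow> real \<times> real \<Rightarrow> real" where
  "intensity \<beta> x = exp (regf x \<bullet> \<beta>)"

definition is_design :: "(real \<times> real) set \<Rightarrow> ((real \<times> real) \<times> real) list \<Rightarrow> bool" where
  "is_design X \<xi> \<longleftrightarrow> distinct (map fst \<xi>) \<and> (\<forall>(x, w) \<in> set \<xi>. x \<in> X \<and> w \<ge> 0)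
     \<and> sum_list (map snd \<xi>) = 1"

definition info_matrix :: "real ^ 4 \<Rightarrow> ((real \<times> real) \<times> real) list \<Rightarrow> real ^ 4 ^ 4" where
  "info_matrix \<beta> \<xi> = sum_list (map (\<lambda>(x, w). (w * intensity \<beta> x) *\<^sub>R
      (\<chi> i j. regf x $ i * regf x $ j)) \<xi>)"

definition locally_D_optimal :: "real ^ 4 \<Rightarrow> (real \<times> real) set \<Rightarrow> ((real \<times> real) \<times> real) list \<Rightarrow> bool" where
  "locally_D_optimal \<beta> X \<xi> \<longleftrightarrow> is_design X \<xi> \<and>
     (\<forall>\<eta>. is_design X \<eta> \<longrightarrow> det (info_matrix \<beta> \<eta>) \<le> det (info_matrix \<beta> \<xi>))"

end

theory Submission
  imports Defs
begin

lemma L1: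
  fixes z :: real
  assumes z0: "0 \<le> z"
  shows "(1 - z)^2 + exp 2 * z^2 \<le> exp (2*z)"
proof -
  define q where "q = exp (2::real)"
  have q1: "q > 1" unfolding q_def by simp
  define R where "R x = exp(-2*x) * ((1-x)^2 + q*x^2)" for x :: real
  have D: "DERIV R x :> exp(-2*x) * (2*(1-x)*((1+q)*x - 2))" for x
  proof -
    have "DERIV R x :> exp(-2*x) * (-2) * ((1-x)^2 + q*x^2) + exp(-2*x) * (2*(1-x)*(-1) + q*(2*x))"
      unfolding R_def by (rule derivative_eq_intros refl | simp)+
    moreover have "exp(-2*x) * (-2) * ((1-x)^2 + q*x^2) + exp(-2*x) * (2*(1-x)*(-1) + q*(2*x))
       = exp(-2*x) * (2*(1-x)*((1+q)*x - 2))"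
      by (simp add: algebra_simps power2_eq_square)
    ultimately show ?thesis by simp
  qed
  have R0: "R 0 = 1" unfolding R_def by simp
  have R1: "R 1 = 1" unfolding R_def q_def by (simp add: exp_minus field_simps)
  define z1 where "z1 = 2 / (1+q)"
  have z1: "0 < z1" "z1 < 1" using q1 unfolding z1_def by (auto simp: field_simps)
  have "R z \<le> 1"
  proof (cases "z \<le> z1")
    case True
    have "R z \<le> R 0"
    proof (rule DERIV_nonpos_imp_nonincreasing[OF z0])
      fix x assume x: "0 \<le> x" "x \<le> z"
      have "(1+q)*x \<le> (1+q)*z" using x q1 by (intro mult_left_mono) auto
      moreover have "(1+q)*z \<le> 2" using True q1 unfolding z1_def by (simp add: field_simps)
      ultimately have a: "(1+q)*x - 2 \<le> 0" by simp
      have b: "0 \<le> 1 - x" using x True z1 by simp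
      have "2*(1-x)*((1+q)*x - 2) \<le> 0" using a b by (simp add: mult_nonneg_nonpos)
      then have "exp(-2*x) * (2*(1-x)*((1+q)*x - 2)) \<le> 0" by (simp add: mult_nonneg_nonpos)
      then show "\<exists>y. DERIV R x :> y \<and> y \<le> 0" using D by blast
    qed
    then show ?thesis using R0 by simp
  next
    case False
    show ?thesis
    proof (cases "z \<le> 1")
      case True
      have "R z \<le> R 1"
      proof (rule DERIV_nonneg_imp_nondecreasing[OF True])
        fix x assume x: "z \<le> x" "x \<le> 1"
        have "(1+q)*x \<ge> (1+q)*z" using x q1 by (intro mult_left_mono) auto
      moreover have "(1+q)*z \<ge> 2" using False q1 unfolding z1_def by (simp add: field_simps)
      ultimately have a: "(1+q)*x - 2 \<ge> 0" by simp
        have b: "0 \<le> 1 - x" using x by simp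
        have "2*(1-x)*((1+q)*x - 2) \<ge> 0" using a b by simp
        then have "exp(-2*x) * (2*(1-x)*((1+q)*x - 2)) \<ge> 0" by simp
        then show "\<exists>y. DERIV R x :> y \<and> y \<ge> 0" using D by blast
      qed
      then show ?thesis using R1 by simp
    next
      case F2: False
      have "R z \<le> R 1"
      proof (rule DERIV_nonpos_imp_nonincreasing[of 1 z R])
        show "1 \<le> z" using F2 by simp
        fix x assume x: "1 \<le> x" "x \<le> z"
        have "(1+q)*x \<ge> (1+q)*1" using x q1 by (intro mult_left_mono) auto
        then have "(1+q)*x \<ge> 1+q" by simp
        then have a: "(1+q)*x - 2 \<ge> 0" using q1 by linarith
        have b: "1 - x \<le> 0" using x by simp
        have "2*(1-x)*((1+q)*x - 2) \<le> 0" using a b by (simp add: mult_nonpos_nonneg)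
        then have "exp(-2*x) * (2*(1-x)*((1+q)*x - 2)) \<le> 0" by (simp add: mult_nonneg_nonpos)
        then show "\<exists>y. DERIV R x :> y \<and> y \<le> 0" using D by blast
      qed
      then show ?thesis using R1 by simp
    qed
  qed
  then have r: "exp(-2*z) * ((1-z)^2 + q*z^2) \<le> 1" unfolding R_def .
  have e: "exp(2*z) * exp(-2*z) = 1" by (simp add: exp_add[symmetric])
  have "(1-z)^2 + q*z^2 = exp(2*z) * (exp(-2*z) * ((1-z)^2 + q*z^2))"
    using e by (metis mult.assoc mult_1)
  also have "\<dots> \<le> exp(2*z) * 1" using r by (intro mult_left_mono) auto
  finally show ?thesis unfolding q_def by simp
qed

lemma cubic_amgm:
  fixes a B C D :: real
  assumes a: "0 \<le> a" and B: "0 \<le> B" and C: "0 \<le> C" and D: "0 < D"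
    and h: "4 * B^3 \<le> 27 * C^2 * D"
  shows "B * a \<le> C + D * a^3"
proof -
  define w where "w = sqrt (B / (3*D))"
  have w0: "0 \<le> w" unfolding w_def using B D by simp
  have w2: "w^2 = B / (3*D)" unfolding w_def using B D by simp
  have Bs: "B = 3*D*w^2" using w2 D by (simp add: field_simps)
  have idn: "C + D * a^3 - B * a = D * (a - w)^2 * (a + 2*w) + (C - 2*D*w^3)"
    unfolding Bs by (simp add: power2_eq_square power3_eq_cube) algebra
  have t1: "0 \<le> D * (a - w)^2 * (a + 2*w)" using D a w0 by simp
  have "(2*D*w^3)^2 = 4*D^2*(w^2)^3" by (simp add: power2_eq_square power3_eq_cube)
  also have "\<dots> = 4 * B^3 / (27 * D)" unfolding w2 using D by (simp add: power3_eq_cube power2_eq_square)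
  also have "\<dots> \<le> C^2" using h D by (simp add: field_simps)
  finally have "(2*D*w^3)^2 \<le> C^2" .
  then have "2*D*w^3 \<le> C" using C by (rule power2_le_imp_le)
  then show ?thesis using idn t1 by linarith
qed

lemma exp2_bounds: "7 \<le> exp (2::real)" "exp (2::real) \<le> 15/2"
proof -
  have e1: "exp (1::real) \<ge> 27/10" "exp (1::real) \<le> 272/100"
    using e_approx_32 e_less_272 by (auto simp: abs_if split: if_splits)
  have "exp (2::real) = exp 1 * exp 1" by (simp add: exp_add[symmetric])
  then show "7 \<le> exp (2::real)" "exp (2::real) \<le> 15/2"
    using e1 mult_mono[of "27/10::real" "exp 1" "27/10" "exp 1"] mult_mono[of "exp 1" "272/100::real" "exp 1" "272/100"]
    by auto
qed

lemma L2:
  fixes a t :: real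
  assumes a0: "0 \<le> a" and t0: "0 < t" and t2: "t \<le> 2"
  shows "(1-a)^2*(1+a-t*a)^2 + exp 2 * t^2/2 * a^2*(1-a)^2 + exp(t+2)*a^4
           \<le> exp(2*t*a + (2-t)*a^2)"
proof -
  define q where "q = exp (2::real)"
  define E where "E = exp (t+2)"
  have q7: "7 \<le> q" and q8: "q \<le> 15/2" unfolding q_def using exp2_bounds by auto
  have Eq: "E \<ge> q*(1+t)"
  proof -
    have "E = exp t * q" unfolding E_def q_def by (simp add: exp_add)
    moreover have "1 + t \<le> exp t" by simp
    ultimately show ?thesis using q7 by (simp add: mult.commute mult_right_mono)
  qed
  define P where "P x = (1-x)^2*(1+x-t*x)^2 + q * t^2/2 * x^2*(1-x)^2 + E*x^4" for x
  define X where "X x = 2*t*x + (2-t)*x^2" for x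
  define c1 where "c1 = 8 - 2*t - 6*t^2 - t^2*q"
  define c2 where "c2 = 8 - 20*t + 8*t^2 + 2*t^2*q + 2*t^3 + t^3*q"
  define c3 where "c3 = -4 - 4*E + 8*t^2 + 2*t^2*q - 4*t^3 - 2*t^3*q"
  define c4 where "c4 = -4 - 4*E + 10*t + 2*t*E - 8*t^2 - 2*t^2*q + 2*t^3 + t^3*q"
  define M where "M x = 4*t + c1*x + c2*x^2 + c3*x^3 + c4*x^4" for x
  define R where "R x = exp(- X x) * P x" for x
  define P' where "P' x = 2*(1-x)*(-1)*(1+x-t*x)^2 + (1-x)^2*(2*(1+x-t*x)*(1-t))
          + q*t^2/2*(2*x*(1-x)^2 + x^2*(2*(1-x)*(-1))) + E*(4*x^3)" for x
  have dX: "DERIV X x :> 2*t + (2-t)*(2*x)" for x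
    unfolding X_def by (auto intro!: derivative_eq_intros)
  have dP: "DERIV P x :> P' x" for x
    unfolding P_def P'_def
    apply (rule derivative_eq_intros refl)+
    apply (simp add: field_simps power2_eq_square power3_eq_cube)
    done
  have dR0: "DERIV R x :> exp(- X x) * (- (2*t + (2-t)*(2*x))) * P x + exp(- X x) * P' x" for x
  proof -
    have de: "DERIV (\<lambda>x. exp (- X x)) x :> exp (- X x) * (- (2*t + (2-t)*(2*x)))"
      using DERIV_chain2[OF DERIV_exp DERIV_minus[OF dX]] by simp
    have "DERIV (\<lambda>x. exp (- X x) * P x) x :> exp (- X x) * (- (2*t + (2-t)*(2*x))) * P x + P' x * exp (- X x)"
      by (rule DERIV_mult[OF de dP])
    then show ?thesis unfolding R_def by (simp add: mult.commute)
  qed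
  have idP: "(- (2*t + (2-t)*(2*x))) * P x + P' x = (x-1) * M x" for x
    unfolding P_def P'_def M_def c1_def c2_def c3_def c4_def
    by (simp add: field_simps power2_eq_square power3_eq_cube power4_eq_xxxx)
  have DR: "DERIV R x :> exp(- X x) * ((x-1) * M x)" for x
  proof -
    have "exp(- X x) * (- (2*t + (2-t)*(2*x))) * P x + exp(- X x) * P' x
        = exp(- X x) * ((- (2*t + (2-t)*(2*x))) * P x + P' x)"
      by (simp only: distrib_left mult.assoc)
    also have "\<dots> = exp(- X x) * ((x-1) * M x)" using idP[of x] by simp
    finally have "exp(- X x) * (- (2*t + (2-t)*(2*x))) * P x + exp(- X x) * P' x = exp(- X x) * ((x-1) * M x)" .
    then show ?thesis using dR0[of x] by simp
  qed
  have M0: "M 0 = 4*t" by (simp add: M_def)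
  have M1: "M 1 \<le> 0"
  proof -
    have "M 1 = 8 - 8*t + 2*t^2 + q*t^2 - (8 - 2*t)*E"
      unfolding M_def c1_def c2_def c3_def c4_def by (simp add: algebra_simps)
    also have "\<dots> \<le> 8 - 8*t + 2*t^2 + q*t^2 - (8 - 2*t)*q"
    proof -
      have "0 \<le> q*t" using q7 t0 by simp
      then have "q \<le> E" using Eq by (simp add: distrib_left)
      then have "(8 - 2*t)*q \<le> (8 - 2*t)*E" using t2 by (intro mult_left_mono) auto
      then show ?thesis by simp
    qed
    also have "\<dots> = (t-2)*(2*t - 4 + q*t + 4*q)" by (simp add: algebra_simps power2_eq_square)
    also have "\<dots> \<le> 0"
    proof (rule mult_nonpos_nonneg)
      show "t - 2 \<le> 0" using t2 by simp
      have "0 \<le> q*t" using q7 t0 by simp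
      then show "0 \<le> 2*t - 4 + q*t + 4*q" using t0 q7 by linarith
    qed
    finally show ?thesis .
  qed
  have c4n: "c4 \<le> 0"
  proof -
    have "c4 = (t-2)*(2*E + 2*(t-1)^2 + q*t^2)" unfolding c4_def by (simp add: algebra_simps power2_eq_square power3_eq_cube)
    also have "\<dots> \<le> 0"
    proof (rule mult_nonpos_nonneg)
      show "t - 2 \<le> 0" using t2 by simp
      have "0 \<le> q*t^2" using q7 by simp
      moreover have "0 \<le> E" unfolding E_def by simp
      ultimately show "0 \<le> 2*E + 2*(t-1)^2 + q*t^2" by (simp add: add_nonneg_nonneg)
    qed
    finally show ?thesis .
  qed
  have c3n: "c3 \<le> -(4+2*q)*t^3"
  proof -
    have "-4*E \<le> -4*q - 4*q*t" using Eq by (simp add: algebra_simps)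
    moreover have "(8+2*q)*t^2 \<le> (16+4*q)*t"
    proof -
      have "(8+2*q)*t^2 = ((8+2*q)*t)*t" by (simp add: power2_eq_square)
      also have "\<dots> \<le> ((8+2*q)*t)*2" using t0 t2 q7 by (intro mult_left_mono) auto
      finally show ?thesis by (simp add: algebra_simps)
    qed
    moreover have "16*t \<le> 32" using t2 by simp
    ultimately show ?thesis unfolding c3_def using q7 by (simp add: algebra_simps)
  qed
  have c1b: "- c1 \<le> (6+q)*t^2" unfolding c1_def using t2 by (simp add: algebra_simps)
  define M' where "M' x = c1 + 2*c2*x + 3*c3*x^2 + 4*c4*x^3" for x
  have K: "x * M' x - 2 * M x \<le> 0" if x0: "0 \<le> x" for x
  proof -
    have "x * M' x - 2 * M x = -8*t + (-c1)*x + c3*x^3 + 2*c4*x^4"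
      unfolding M'_def M_def by (simp add: algebra_simps power2_eq_square power3_eq_cube power4_eq_xxxx)
    also have "\<dots> \<le> -8*t + ((6+q)*t^2)*x - ((4+2*q)*t^3)*x^3"
    proof -
      have "(-c1)*x \<le> ((6+q)*t^2)*x" using c1b x0 by (intro mult_right_mono) auto
      moreover have "c3*x^3 \<le> (-(4+2*q)*t^3)*x^3" using c3n x0 by (intro mult_right_mono) auto
      moreover have "2*c4*x^4 \<le> 0" using c4n x0 by (simp add: mult_nonpos_nonneg)
      moreover have "(-(4+2*q)*t^3)*x^3 = -(((4+2*q)*t^3)*x^3)" by (simp add: algebra_simps)
      ultimately show ?thesis by linarith
    qed
    also have "\<dots> \<le> 0"
    proof -
      have "((6+q)*t^2) * x \<le> 8*t + ((4+2*q)*t^3) * x^3"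
      proof (rule cubic_amgm)
        show "0 \<le> x" by fact
        show "0 \<le> (6+q)*t^2" using q7 by simp
        show "0 \<le> 8*t" using t0 by simp
        show "0 < (4+2*q)*t^3" using q7 t0 by simp
        have "(6+q)^3 \<le> (27/2)^3" using q7 q8 by (intro power_mono) auto
        also have "(27/2::real)^3 = 19683/8" by (simp add: power3_eq_cube)
        finally have "(6+q)^3 \<le> 19683/8" .
        then have "8*(6+q)^3 \<le> 8*(19683/8)" by (rule mult_left_mono) simp
        also have "\<dots> \<le> 1728*(4+2*q)" using q7 by simp
        finally have h1: "8*(6+q)^3 \<le> 1728*(4+2*q)" .
        have h2: "4*t*(6+q)^3 \<le> 8*(6+q)^3" using t2 q7 by (intro mult_right_mono) auto
        have "4*((6+q)*t^2)^3 = (4*t*(6+q)^3)*t^5" by algebra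
        also have "\<dots> \<le> (1728*(4+2*q))*t^5" using h1 h2 t0 by (intro mult_right_mono) auto
        also have "\<dots> = 27*(8*t)^2*((4+2*q)*t^3)" by algebra
        finally show "4*((6+q)*t^2)^3 \<le> 27*(8*t)^2*((4+2*q)*t^3)" .
      qed
      then show ?thesis by simp
    qed
    finally show ?thesis .
  qed
  have dM: "DERIV M x :> M' x" for x
    unfolding M_def M'_def
    apply (rule derivative_eq_intros refl)+
    apply (simp add: algebra_simps)
    done
  have Mmono: "M z / z^2 \<le> M y / y^2" if y0: "0 < y" and yz: "y \<le> z" for y z
  proof (rule DERIV_nonpos_imp_nonincreasing[of y z "\<lambda>x. M x / x^2", OF yz])
    fix x assume x: "y \<le> x" "x \<le> z"
    then have x0: "0 < x" using y0 by simp
    have d2: "DERIV (\<lambda>x. x^2) x :> 2*x"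
      by (rule derivative_eq_intros refl)+ simp
    have "DERIV (\<lambda>x. M x / x^2) x :> (M' x * x^2 - M x * (2*x)) / (x^2 * x^2)"
      using DERIV_divide[OF dM d2] x0 by simp
    moreover have "(M' x * x^2 - M x * (2*x)) / (x^2 * x^2) \<le> 0"
    proof -
      have "M' x * x^2 - M x * (2*x) = x * (x * M' x - 2 * M x)" by (simp add: algebra_simps power2_eq_square)
      also have "\<dots> \<le> 0" using K[of x] x0 by (simp add: mult_nonneg_nonpos)
      finally show ?thesis by (simp add: divide_nonpos_nonneg)
    qed
    ultimately show "\<exists>d. DERIV (\<lambda>x. M x / x^2) x :> d \<and> d \<le> 0" by blast
  qed
  have R0: "R 0 = 1" by (simp add: R_def X_def P_def)
  have R1: "R 1 = 1"
  proof -
    have "X 1 = t + 2" by (simp add: X_def)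
    moreover have "P 1 = E" by (simp add: P_def)
    moreover have "exp (- (t + 2)) * exp (t + 2) = 1" by (simp add: exp_add[symmetric])
    ultimately show ?thesis unfolding R_def E_def by simp
  qed
  have Rle: "R a \<le> 1"
  proof (cases "1 \<le> a")
    case True
    have "R a \<le> R 1"
    proof (rule DERIV_nonpos_imp_nonincreasing[of 1 a R, OF True])
      fix x assume x: "1 \<le> x" "x \<le> a"
      have "M x / x^2 \<le> M 1 / 1^2" using Mmono[of 1 x] x by simp
      then have "M x / x^2 \<le> 0" using M1 by simp
      then have "M x \<le> 0" using x by (simp add: divide_le_0_iff)
      then have "exp(- X x) * ((x-1) * M x) \<le> 0" using x by (simp add: mult_nonneg_nonpos)
      then show "\<exists>d. DERIV R x :> d \<and> d \<le> 0" using DR by blast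
    qed
    then show ?thesis using R1 by simp
  next
    case False
    show ?thesis
    proof (cases "0 \<le> M a")
      case True
      have "R a \<le> R 0"
      proof (rule DERIV_nonpos_imp_nonincreasing[of 0 a R, OF a0])
        fix x assume x: "0 \<le> x" "x \<le> a"
        have Mx: "0 \<le> M x"
        proof (cases "x = 0")
          case True then show ?thesis using M0 t0 by simp
        next
          case False
          then have x0: "0 < x" using x by simp
          have "M a / a^2 \<le> M x / x^2" using Mmono[of x a] x0 x by simp
          moreover have "0 \<le> M a / a^2" using True by simp
          ultimately have "0 \<le> M x / x^2" by linarith
          then show ?thesis using x0 by (simp add: zero_le_divide_iff)
        qed
        have "(x-1) * M x \<le> 0" using Mx x False by (simp add: mult_nonpos_nonneg)
        then have "exp(- X x) * ((x-1) * M x) \<le> 0" by (simp add: mult_nonneg_nonpos)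
        then show "\<exists>d. DERIV R x :> d \<and> d \<le> 0" using DR by blast
      qed
      then show ?thesis using R0 by simp
    next
      case Mneg: False
      have apos: "0 < a"
      proof (rule ccontr)
        assume "\<not> 0 < a" then have "a = 0" using a0 by simp
        then show False using Mneg M0 t0 by simp
      qed
      have "R a \<le> R 1"
      proof (rule DERIV_nonneg_imp_nondecreasing[of a 1 R])
        show "a \<le> 1" using False by simp
        fix x assume x: "a \<le> x" "x \<le> 1"
        have "M x / x^2 \<le> M a / a^2" using Mmono[of a x] apos x by simp
        moreover have "M a / a^2 < 0" using Mneg apos by (simp add: divide_neg_pos)
        ultimately have "M x / x^2 < 0" by linarith
        then have "M x < 0" using x apos by (simp add: divide_less_0_iff)
        then have "0 \<le> (x-1) * M x" using x by (simp add: mult_nonpos_nonpos)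
        then have "0 \<le> exp(- X x) * ((x-1) * M x)" by simp
        then show "\<exists>d. DERIV R x :> d \<and> 0 \<le> d" using DR by blast
      qed
      then show ?thesis using R1 by simp
    qed
  qed
  have e: "exp (X a) * exp (- X a) = 1" by (simp add: exp_add[symmetric])
  have "P a = exp (X a) * R a" unfolding R_def using e by (metis mult.assoc mult_1)
  also have "\<dots> \<le> exp (X a) * 1" using Rle by (intro mult_left_mono) auto
  finally show ?thesis unfolding P_def X_def q_def E_def by (simp add: mult.assoc)
qed

lemma sens:
  fixes u w t :: real
  assumes u0: "0 \<le> u" and w0: "0 \<le> w" and t0: "0 < t" and t2: "t \<le> 2"
  shows "(1 - u/2 - w/2 + (t-1)*u*w/t^2)^2 + exp 2 * (u*(t-w)/(2*t))^2 + exp 2 * (w*(t-u)/(2*t))^2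
          + exp(t+2) * (u*w/t^2)^2 \<le> exp(u + w + (2-t)/t^2*u*w)"
proof -
  define q where "q = exp (2::real)"
  define E where "E = exp (t+2)"
  define \<rho> where "\<rho> = (2-t)/t^2"
  have \<rho>0: "0 \<le> \<rho>" unfolding \<rho>_def using t2 by simp
  define \<eta> where "\<eta> = u + w + \<rho>*u*w"
  have \<eta>0: "0 \<le> \<eta>" unfolding \<eta>_def using u0 w0 \<rho>0 by simp
  define H where "H z c = (1 - z + t*c/2)^2 + q*(z-c)^2 + (E + q*t^2/4)*c^2 - (q*t^2/2)*c" for z c
  define z where "z = \<eta>/2"
  define c where "c = u*w/t^2"
  have c0: "0 \<le> c" unfolding c_def using u0 w0 by simp
  have LH: "(1 - u/2 - w/2 + (t-1)*u*w/t^2)^2 + q * (u*(t-w)/(2*t))^2 + q * (w*(t-u)/(2*t))^2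
          + E * (u*w/t^2)^2 = H z c"
    unfolding H_def z_def c_def \<eta>_def \<rho>_def using t0
    by (simp add: field_simps power2_eq_square)
  define sq where "sq = sqrt (1 + \<rho>*\<eta>)"
  have sq1: "1 \<le> sq" unfolding sq_def using \<rho>0 \<eta>0 by simp
  have sq2: "sq^2 = 1 + \<rho>*\<eta>" unfolding sq_def using \<rho>0 \<eta>0 by simp
  define r where "r = \<eta> / (1 + sq)"
  have r0: "0 \<le> r" unfolding r_def using \<eta>0 sq1 by simp
  have rr: "2*r + \<rho>*r^2 = \<eta>"
  proof -
    have re: "\<rho>*\<eta> = (sq - 1)*(sq + 1)" using sq2 by (simp add: algebra_simps power2_eq_square)
    have sp: "1 + sq \<noteq> 0" using sq1 by simp
    have "\<rho>*r^2 = (\<rho>*\<eta>)*\<eta>/((1+sq)*(1+sq))" unfolding r_def by (simp add: power2_eq_square)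
    also have "\<dots> = ((sq - 1)*\<eta>) * (1+sq) / ((1+sq)*(1+sq))" unfolding re by (simp add: algebra_simps)
    also have "\<dots> = (sq - 1)*\<eta>/(1+sq)" using sp by simp
    finally have A: "\<rho>*r^2 = (sq - 1)*\<eta>/(1+sq)" .
    have "2*r + \<rho>*r^2 = 2*r + (sq - 1)*\<eta>/(1+sq)" using A by simp
    also have "\<dots> = (2*\<eta> + (sq-1)*\<eta>)/(1+sq)" unfolding r_def by (simp add: add_divide_distrib)
    also have "\<dots> = \<eta>*(1+sq)/(1+sq)" by (simp add: algebra_simps)
    also have "\<dots> = \<eta>" using sp by simp
    finally show ?thesis .
  qed
  have uwr: "u*w \<le> r^2"
  proof -
    define m where "m = sqrt (u*w)"
    have m0: "0 \<le> m" unfolding m_def using u0 w0 by simp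
    have m2: "m^2 = u*w" unfolding m_def using u0 w0 by simp
    have "2*m \<le> u + w"
    proof -
      have e1: "(2*m)^2 = 4*(u*w)" using m2 by (simp add: power_mult_distrib)
      have e2: "(u+w)^2 = (u-w)^2 + 4*(u*w)" by (simp add: power2_eq_square algebra_simps)
      have "0 \<le> (u-w)^2" by simp
      then have "(2*m)^2 \<le> (u+w)^2" using e1 e2 by linarith
      moreover have "0 \<le> u + w" using u0 w0 by simp
      ultimately show ?thesis by (rule power2_le_imp_le)
    qed
    then have "2*m + \<rho>*m^2 \<le> u + w + \<rho>*(u*w)" using m2 by simp
    also have "\<dots> = 2*r + \<rho>*r^2" using rr unfolding \<eta>_def by (simp add: mult.assoc)
    finally have "2*m + \<rho>*m^2 \<le> 2*r + \<rho>*r^2" .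
    then have "m \<le> r"
    proof (rule contrapos_pp)
      assume "\<not> m \<le> r"
      then have mr: "r < m" by simp
      have "r^2 \<le> m^2" using mr r0 by (intro power_mono) auto
      then have "\<rho>*r^2 \<le> \<rho>*m^2" using \<rho>0 by (intro mult_left_mono)
      then show "\<not> 2*m + \<rho>*m^2 \<le> 2*r + \<rho>*r^2" using mr by simp
    qed
    then have "m^2 \<le> r^2" using m0 by (intro power_mono)
    then show ?thesis using m2 by simp
  qed
  define C where "C = r^2/t^2"
  have cC: "c \<le> C" unfolding c_def C_def using uwr t0 by (simp add: divide_right_mono)
  have z0: "0 \<le> z" unfolding z_def using \<eta>0 by simp
  have e2z: "exp (2*z) = exp \<eta>" unfolding z_def by simp
  have H0: "H z 0 \<le> exp \<eta>"
  proof -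
    have "H z 0 = (1-z)^2 + exp 2 * z^2" unfolding H_def q_def by simp
    also have "\<dots> \<le> exp (2*z)" by (rule L1[OF z0])
    finally show ?thesis using e2z by simp
  qed
  have HC: "H z C \<le> exp \<eta>"
  proof -
    define a where "a = r/t"
    have a0: "0 \<le> a" unfolding a_def using r0 t0 by simp
    have zr: "z = r + \<rho>*r^2/2" unfolding z_def using rr by (simp add: field_simps)
    have "H z C = (1-a)^2*(1+a-t*a)^2 + exp 2 * t^2/2 * a^2*(1-a)^2 + exp(t+2)*a^4"
      unfolding H_def zr C_def a_def \<rho>_def q_def E_def using t0
      by (simp add: field_simps power2_eq_square power3_eq_cube power4_eq_xxxx)
    also have "\<dots> \<le> exp(2*t*a + (2-t)*a^2)" by (rule L2[OF a0 t0 t2])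
    also have "2*t*a + (2-t)*a^2 = \<eta>" unfolding a_def using rr t0 unfolding \<rho>_def
      by (simp add: field_simps power2_eq_square)
    finally show ?thesis .
  qed
  have Hc: "H z c \<le> exp \<eta>"
  proof (cases "C = 0")
    case True
    then have "c = 0" using cC c0 by simp
    then show ?thesis using H0 by simp
  next
    case False
    then have Cpos: "0 < C" unfolding C_def using t0 by simp
    define l where "l = c / C"
    have l0: "0 \<le> l" "l \<le> 1" unfolding l_def using c0 cC Cpos by auto
    have cl: "c = l * C" unfolding l_def using Cpos by simp
    define \<alpha> where "\<alpha> = t^2/4 + q + E + q*t^2/4"
    have \<alpha>0: "0 \<le> \<alpha>" unfolding \<alpha>_def q_def E_def by simp
    have conv: "(1-l)*H z 0 + l*H z C - H z (l*C) = \<alpha>*l*(1-l)*C^2"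
      unfolding H_def \<alpha>_def by (simp add: field_simps power2_eq_square)
    have "0 \<le> \<alpha>*l*(1-l)*C^2" using \<alpha>0 l0 by simp
    then have "H z c \<le> (1-l)*H z 0 + l*H z C" using conv cl by simp
    also have "\<dots> \<le> (1-l)*exp \<eta> + l*exp \<eta>"
      using H0 HC l0 by (intro add_mono mult_left_mono) auto
    also have "\<dots> = exp \<eta>" by (simp add: algebra_simps)
    finally show ?thesis .
  qed
  show ?thesis using LH Hc unfolding q_def E_def \<eta>_def \<rho>_def by simp
qed

lemma had3:
  fixes a b c d e f :: real
  assumes psd: "\<And>x1 x2 x3. 0 \<le> a*x1^2 + d*x2^2 + f*x3^2 + 2*(b*x1*x2 + c*x1*x3 + e*x2*x3)"
  shows "a*d*f + 2*b*c*e - a*e^2 - b^2*f - c^2*d \<le> a*d*f"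
proof -
  have a0: "0 \<le> a" using psd[of 1 0 0] by simp
  have d0: "0 \<le> d" using psd[of 0 1 0] by simp
  have f0: "0 \<le> f" using psd[of 0 0 1] by simp
  show ?thesis
  proof (cases "a = 0")
    case True
    have b0: "b = 0"
    proof (rule ccontr)
      assume "b \<noteq> 0"
      have "0 \<le> d + 2*b*(-(d+1)/(2*b))" using psd[of "-(d+1)/(2*b)" 1 0] True by (simp add: algebra_simps)
      then show False using \<open>b \<noteq> 0\<close> by (simp add: field_simps)
    qed
    have c0: "c = 0"
    proof (rule ccontr)
      assume "c \<noteq> 0"
      have "0 \<le> f + 2*c*(-(f+1)/(2*c))" using psd[of "-(f+1)/(2*c)" 0 1] True by (simp add: algebra_simps)
      then show False using \<open>c \<noteq> 0\<close> by (simp add: field_simps)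
    qed
    show ?thesis using True b0 c0 by simp
  next
    case False
    then have ap: "0 < a" using a0 by simp
    define d' where "d' = d - b^2/a"
    define e' where "e' = e - b*c/a"
    define f' where "f' = f - c^2/a"
    have idt: "a*d*f + 2*b*c*e - a*e^2 - b^2*f - c^2*d = a*(d'*f' - e'^2)"
      unfolding d'_def e'_def f'_def using ap by (simp add: field_simps power2_eq_square)
    have d'0: "0 \<le> d'"
    proof -
      have "0 \<le> a*(-b/a)^2 + d*1^2 + f*0^2 + 2*(b*(-b/a)*1 + c*(-b/a)*0 + e*1*0)" by (rule psd)
      then show ?thesis unfolding d'_def using ap by (simp add: field_simps power2_eq_square)
    qed
    have f'0: "0 \<le> f'"
    proof -
      have "0 \<le> a*(-c/a)^2 + d*0^2 + f*1^2 + 2*(b*(-c/a)*0 + c*(-c/a)*1 + e*0*1)" by (rule psd)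
      then show ?thesis unfolding f'_def using ap by (simp add: field_simps power2_eq_square)
    qed
    have d'd: "d' \<le> d" unfolding d'_def using ap by simp
    have f'f: "f' \<le> f" unfolding f'_def using ap by simp
    have "a*(d'*f' - e'^2) \<le> a*(d'*f')" using ap by (simp add: mult_left_mono)
    also have "\<dots> \<le> a*(d*f)" using d'0 f'0 d'd f'f ap by (intro mult_left_mono mult_mono) auto
    finally show ?thesis using idt by (simp add: mult.assoc)
  qed
qed

lemma had4:
  fixes a11 a12 a13 a14 a22 a23 a24 a33 a34 a44 :: real
  assumes psd: "\<And>x1 x2 x3 x4. 0 \<le> a11*x1^2 + a22*x2^2 + a33*x3^2 + a44*x4^2
     + 2*(a12*x1*x2 + a13*x1*x3 + a14*x1*x4 + a23*x2*x3 + a24*x2*x4 + a34*x3*x4)"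
  shows "(a11*a22*a33*a44 - a11*a22*a34*a34 - a11*a23*a23*a44 + a11*a23*a34*a24  + a11*a24*a23*a34 - a11*a24*a33*a24  - a12*a12*a33*a44 + a12*a12*a34*a34 + a12*a23*a13*a44 - a12*a23*a34*a14  - a12*a24*a13*a34 + a12*a24*a33*a14  + a13*a12*a23*a44 - a13*a12*a34*a24 - a13*a22*a13*a44 + a13*a22*a34*a14  + a13*a24*a13*a24 - a13*a24*a23*a14  - a14*a12*a23*a34 + a14*a12*a33*a24 + a14*a22*a13*a34 - a14*a22*a33*a14  - a14*a23*a13*a24 + a14*a23*a23*a14) \<le> a11*a22*a33*a44"
proof -
  have a0: "0 \<le> a11" using psd[of 1 0 0 0] by simp
  have d0: "0 \<le> a22" using psd[of 0 1 0 0] by simp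
  have f0: "0 \<le> a33" using psd[of 0 0 1 0] by simp
  have g0: "0 \<le> a44" using psd[of 0 0 0 1] by simp
  show ?thesis
  proof (cases "a11 = 0")
    case True
    have b0: "a12 = 0"
    proof (rule ccontr)
      assume h: "a12 \<noteq> 0"
      have "0 \<le> a22 + 2*a12*(-(a22+1)/(2*a12))" using psd[of "-(a22+1)/(2*a12)" 1 0 0] True by (simp add: algebra_simps)
      then show False using h by (simp add: field_simps)
    qed
    have c0: "a13 = 0"
    proof (rule ccontr)
      assume h: "a13 \<noteq> 0"
      have "0 \<le> a33 + 2*a13*(-(a33+1)/(2*a13))" using psd[of "-(a33+1)/(2*a13)" 0 1 0] True by (simp add: algebra_simps)
      then show False using h by (simp add: field_simps)
    qed
    have e0: "a14 = 0"
    proof (rule ccontr)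
      assume h: "a14 \<noteq> 0"
      have "0 \<le> a44 + 2*a14*(-(a44+1)/(2*a14))" using psd[of "-(a44+1)/(2*a14)" 0 0 1] True by (simp add: algebra_simps)
      then show False using h by (simp add: field_simps)
    qed
    show ?thesis using True b0 c0 e0 by simp
  next
    case False
    then have ap: "0 < a11" using a0 by simp
    define b22 where "b22 = a22 - a12^2/a11"
    define b23 where "b23 = a23 - a12*a13/a11"
    define b24 where "b24 = a24 - a12*a14/a11"
    define b33 where "b33 = a33 - a13^2/a11"
    define b34 where "b34 = a34 - a13*a14/a11"
    define b44 where "b44 = a44 - a14^2/a11"
    have idt: "(a11*a22*a33*a44 - a11*a22*a34*a34 - a11*a23*a23*a44 + a11*a23*a34*a24  + a11*a24*a23*a34 - a11*a24*a33*a24  - a12*a12*a33*a44 + a12*a12*a34*a34 + a12*a23*a13*a44 - a12*a23*a34*a14  - a12*a24*a13*a34 + a12*a24*a33*a14  + a13*a12*a23*a44 - a13*a12*a34*a24 - a13*a22*a13*a44 + a13*a22*a34*a14  + a13*a24*a13*a24 - a13*a24*a23*a14  - a14*a12*a23*a34 + a14*a12*a33*a24 + a14*a22*a13*a34 - a14*a22*a33*a14  - a14*a23*a13*a24 + a14*a23*a23*a14) = a11*(b22*b33*b44 + 2*b23*b24*b34 - b22*b34^2 - b23^2*b44 - b24^2*b33)"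
      unfolding b22_def b23_def b24_def b33_def b34_def b44_def using ap
      by (simp add: field_simps power2_eq_square)
    have psdS: "0 \<le> b22*x2^2 + b33*x3^2 + b44*x4^2 + 2*(b23*x2*x3 + b24*x2*x4 + b34*x3*x4)" for x2 x3 x4
    proof -
      define y where "y = -(a12*x2 + a13*x3 + a14*x4)/a11"
      have "0 \<le> a11*y^2 + a22*x2^2 + a33*x3^2 + a44*x4^2
         + 2*(a12*y*x2 + a13*y*x3 + a14*y*x4 + a23*x2*x3 + a24*x2*x4 + a34*x3*x4)" by (rule psd)
      also have "\<dots> = b22*x2^2 + b33*x3^2 + b44*x4^2 + 2*(b23*x2*x3 + b24*x2*x4 + b34*x3*x4)"
        unfolding y_def b22_def b23_def b24_def b33_def b34_def b44_def using ap
        by (simp add: field_simps power2_eq_square)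
      finally show ?thesis .
    qed
    have h3: "b22*b33*b44 + 2*b23*b24*b34 - b22*b34^2 - b23^2*b44 - b24^2*b33 \<le> b22*b33*b44"
      by (rule had3) (rule psdS)
    have b22p: "0 \<le> b22" using psdS[of 1 0 0] by simp
    have b33p: "0 \<le> b33" using psdS[of 0 1 0] by simp
    have b44p: "0 \<le> b44" using psdS[of 0 0 1] by simp
    have b22l: "b22 \<le> a22" unfolding b22_def using ap by simp
    have b33l: "b33 \<le> a33" unfolding b33_def using ap by simp
    have b44l: "b44 \<le> a44" unfolding b44_def using ap by simp
    have "(a11*a22*a33*a44 - a11*a22*a34*a34 - a11*a23*a23*a44 + a11*a23*a34*a24  + a11*a24*a23*a34 - a11*a24*a33*a24  - a12*a12*a33*a44 + a12*a12*a34*a34 + a12*a23*a13*a44 - a12*a23*a34*a14  - a12*a24*a13*a34 + a12*a24*a33*a14  + a13*a12*a23*a44 - a13*a12*a34*a24 - a13*a22*a13*a44 + a13*a22*a34*a14  + a13*a24*a13*a24 - a13*a24*a23*a14  - a14*a12*a23*a34 + a14*a12*a33*a24 + a14*a22*a13*a34 - a14*a22*a33*a14  - a14*a23*a13*a24 + a14*a23*a23*a14) \<le> a11*(b22*b33*b44)" unfolding idt using h3 ap by (intro mult_left_mono) auto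
    also have "\<dots> \<le> a11*(a22*a33*a44)"
      using b22p b33p b44p b22l b33l b44l ap d0 f0 g0
      by (intro mult_left_mono mult_mono) (auto intro: mult_nonneg_nonneg)
    finally show ?thesis by (simp add: mult.assoc)
  qed
qed

lemma vector_4 [simp]:
 "(vector [a,b,c,d] ::('a::zero)^4)$1 = a"
 "(vector [a,b,c,d] ::('a::zero)^4)$2 = b"
 "(vector [a,b,c,d] ::('a::zero)^4)$3 = c"
 "(vector [a,b,c,d] ::('a::zero)^4)$4 = d"
  unfolding vector_def by simp_all

lemma  det_4:
  "det (A::'a::comm_ring_1^4^4) =
 A$1$1*A$2$2*A$3$3*A$4$4 - A$1$1*A$2$2*A$3$4*A$4$3 - A$1$1*A$2$3*A$3$2*A$4$4 + A$1$1*A$2$3*A$3$4*A$4$2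
 + A$1$1*A$2$4*A$3$2*A$4$3 - A$1$1*A$2$4*A$3$3*A$4$2
 - A$1$2*A$2$1*A$3$3*A$4$4 + A$1$2*A$2$1*A$3$4*A$4$3 + A$1$2*A$2$3*A$3$1*A$4$4 - A$1$2*A$2$3*A$3$4*A$4$1
 - A$1$2*A$2$4*A$3$1*A$4$3 + A$1$2*A$2$4*A$3$3*A$4$1
 + A$1$3*A$2$1*A$3$2*A$4$4 - A$1$3*A$2$1*A$3$4*A$4$2 - A$1$3*A$2$2*A$3$1*A$4$4 + A$1$3*A$2$2*A$3$4*A$4$1
 + A$1$3*A$2$4*A$3$1*A$4$2 - A$1$3*A$2$4*A$3$2*A$4$1
 - A$1$4*A$2$1*A$3$2*A$4$3 + A$1$4*A$2$1*A$3$3*A$4$2 + A$1$4*A$2$2*A$3$1*A$4$3 - A$1$4*A$2$2*A$3$3*A$4$1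
 - A$1$4*A$2$3*A$3$1*A$4$2 + A$1$4*A$2$3*A$3$2*A$4$1"
proof -
  have f1: "finite {2::4, 3, 4}" "1 \<notin> {2::4, 3, 4}" by auto
  have f2: "finite {3::4, 4}" "2 \<notin> {3::4, 4}" by auto
  have f3: "finite {4::4}" "3 \<notin> {4::4}" by auto
  show ?thesis
    unfolding det_def UNIV_4
    unfolding sum_over_permutations_insert[OF f1]
    unfolding sum_over_permutations_insert[OF f2]
    unfolding sum_over_permutations_insert[OF f3]
    unfolding permutes_sing
    by (simp add: sign_swap_id permutation_swap_id permutation_compose sign_compose sign_id swap_id_eq algebra_simps)
qed

lemma hadamard_mat:
  fixes N :: "real^4^4"
  assumes sym: "\<And>i j. N$i$j = N$j$i"
    and psd: "\<And>x::real^4. 0 \<le> (\<Sum>i\<in>UNIV. \<Sum>j\<in>UNIV. N$i$j * x$i * x$j)"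
  shows "det N \<le> N$1$1 * N$2$2 * N$3$3 * N$4$4"
proof -
  have s: "N$2$1 = N$1$2" "N$3$1 = N$1$3" "N$4$1 = N$1$4" "N$3$2 = N$2$3" "N$4$2 = N$2$4" "N$4$3 = N$3$4"
    using sym by auto
  have p: "0 \<le> N$1$1*x1^2 + N$2$2*x2^2 + N$3$3*x3^2 + N$4$4*x4^2
     + 2*(N$1$2*x1*x2 + N$1$3*x1*x3 + N$1$4*x1*x4 + N$2$3*x2*x3 + N$2$4*x2*x4 + N$3$4*x3*x4)"
    for x1 x2 x3 x4
  proof -
    have "0 \<le> (\<Sum>i\<in>UNIV. \<Sum>j\<in>UNIV. N$i$j * (vector [x1,x2,x3,x4] :: real^4)$i * (vector [x1,x2,x3,x4] :: real^4)$j)"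
      by (rule psd)
    also have "\<dots> = N$1$1*x1^2 + N$2$2*x2^2 + N$3$3*x3^2 + N$4$4*x4^2
     + 2*(N$1$2*x1*x2 + N$1$3*x1*x3 + N$1$4*x1*x4 + N$2$3*x2*x3 + N$2$4*x2*x4 + N$3$4*x3*x4)"
      unfolding sum_4 by (simp add: s algebra_simps power2_eq_square)
    finally show ?thesis .
  qed
  have "det N = N$1$1*N$2$2*N$3$3*N$4$4 - N$1$1*N$2$2*N$3$4*N$3$4 - N$1$1*N$2$3*N$2$3*N$4$4 + N$1$1*N$2$3*N$3$4*N$2$4  + N$1$1*N$2$4*N$2$3*N$3$4 - N$1$1*N$2$4*N$3$3*N$2$4  - N$1$2*N$1$2*N$3$3*N$4$4 + N$1$2*N$1$2*N$3$4*N$3$4 + N$1$2*N$2$3*N$1$3*N$4$4 - N$1$2*N$2$3*N$3$4*N$1$4  - N$1$2*N$2$4*N$1$3*N$3$4 + N$1$2*N$2$4*N$3$3*N$1$4  + N$1$3*N$1$2*N$2$3*N$4$4 - N$1$3*N$1$2*N$3$4*N$2$4 - N$1$3*N$2$2*N$1$3*N$4$4 + N$1$3*N$2$2*N$3$4*N$1$4  + N$1$3*N$2$4*N$1$3*N$2$4 - N$1$3*N$2$4*N$2$3*N$1$4  - N$1$4*N$1$2*N$2$3*N$3$4 + N$1$4*N$1$2*N$3$3*N$2$4 + N$1$4*N$2$2*N$1$3*N$3$4 - N$1$4*N$2$2*N$3$3*N$1$4  - N$1$4*N$2$3*N$1$3*N$2$4 + N$1$4*N$2$3*N$2$3*N$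1$4"
    unfolding det_4 s ..
  also have "\<dots> \<le> N$1$1 * N$2$2 * N$3$3 * N$4$4"
    by (rule had4) (rule p)
  finally show ?thesis .
qed

lemma amgm4:
  fixes a b c d :: real
  assumes "0 \<le> a" "0 \<le> b" "0 \<le> c" "0 \<le> d"
  shows "a*b*c*d \<le> ((a+b+c+d)/4)^4"
proof -
  have am2: "x*y \<le> ((x+y)/2)^2" for x y :: real
  proof -
    have "((x+y)/2)^2 - x*y = ((x-y)/2)^2" by (simp add: field_simps power2_eq_square)
    moreover have "0 \<le> ((x-y)/2)^2" by simp
    ultimately show ?thesis by linarith
  qed
  have 1: "a*b \<le> ((a+b)/2)^2" by (rule am2)
  have 2: "c*d \<le> ((c+d)/2)^2" by (rule am2)
  have e: "((a+b)/2 + (c+d)/2)/2 = (a+b+c+d)/4" by (simp add: field_simps)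
  have 3: "((a+b)/2)*((c+d)/2) \<le> ((a+b+c+d)/4)^2"
    using am2[of "(a+b)/2" "(c+d)/2", unfolded e] .
  have "a*b*c*d = (a*b)*(c*d)" by (simp add: mult.assoc)
  also have "\<dots> \<le> ((a+b)/2)^2 * ((c+d)/2)^2" using 1 2 assms by (intro mult_mono) auto
  also have "\<dots> = (((a+b)/2)*((c+d)/2))^2" by (rule power_mult_distrib[symmetric])
  also have "\<dots> \<le> (((a+b+c+d)/4)^2)^2" using 3 assms by (intro power_mono) auto
  also have "\<dots> = ((a+b+c+d)/4)^4" by simp
  finally show ?thesis .
qed

definition Nm :: "real^4 \<Rightarrow> (real \<times> real \<Rightarrow> real^4) \<Rightarrow> ((real \<times> real) \<times> real) list \<Rightarrow> real^4^4" where
  "Nm \<beta> lag \<eta> = sum_list (map (\<lambda>(x, w). (w * intensity \<beta> x) *\<^sub>R (\<chi> i j. lag x $ i * lag x $ j)) \<eta>)"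

lemma congr_add:
  fixes F A B :: "real^'n^'n"
  shows "transpose F ** (A + B) ** F = transpose F ** A ** F + transpose F ** B ** F"
  by (simp add: matrix_matrix_mult_def vec_eq_iff sum.distrib algebra_simps)

lemma congr_scale:
  fixes F A :: "real^'n^'n"
  shows "transpose F ** (c *\<^sub>R A) ** F = c *\<^sub>R (transpose F ** A ** F)"
  by (simp add: matrix_matrix_mult_def vec_eq_iff sum_distrib_left algebra_simps)

lemma congr_outer:
  fixes F :: "real^'n^'n" and g h :: "real^'n"
  assumes h: "\<And>a. h$a = (\<Sum>k\<in>UNIV. F$k$a * g$k)"
  shows "transpose F ** (\<chi> i j. g$i * g$j) ** F = (\<chi> i j. h$i * h$j)"
proof -
  have "(transpose F ** (\<chi> i j. g$i * g$j) ** F)$a$b = h$a * h$b" for a b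
  proof -
    have "(transpose F ** (\<chi> i j. g$i * g$j) ** F)$a$b
        = (\<Sum>k\<in>UNIV. \<Sum>i\<in>UNIV. (F$i$a * g$i) * (F$k$b * g$k))"
      by (simp add: matrix_matrix_mult_def transpose_def sum_distrib_right sum_distrib_left mult_ac)
    also have "\<dots> = (\<Sum>i\<in>UNIV. \<Sum>k\<in>UNIV. (F$i$a * g$i) * (F$k$b * g$k))"
      by (rule sum.swap)
    also have "\<dots> = (\<Sum>i\<in>UNIV. F$i$a * g$i) * (\<Sum>k\<in>UNIV. F$k$b * g$k)"
      by (simp add: sum_product)
    also have "\<dots> = h$a * h$b" using h by (simp add: mult.commute)
    finally show ?thesis .
  qed
  then show ?thesis by (simp add: vec_eq_iff)
qed

lemma info_eq:
  fixes F :: "real^4^4"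
  assumes interp: "\<And>y a. regf y $ a = (\<Sum>k\<in>UNIV. F$k$a * lag y $ k)"
  shows "info_matrix \<beta> \<eta> = transpose F ** Nm \<beta> lag \<eta> ** F"
proof (induction \<eta>)
  case Nil
  then show ?case by (simp add: info_matrix_def Nm_def)
next
  case (Cons p \<eta>)
  obtain x w where p: "p = (x, w)" by (cases p)
  have "info_matrix \<beta> (p # \<eta>) = (w * intensity \<beta> x) *\<^sub>R (\<chi> i j. regf x $ i * regf x $ j) + info_matrix \<beta> \<eta>"
    by (simp add: info_matrix_def p)
  also have "\<dots> = (w * intensity \<beta> x) *\<^sub>R (transpose F ** (\<chi> i j. lag x $ i * lag x $ j) ** F)
      + transpose F ** Nm \<beta> lag \<eta> ** F"
    using Cons congr_outer[of "regf x" F "lag x", OF interp] by simp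
  also have "\<dots> = transpose F ** Nm \<beta> lag (p # \<eta>) ** F"
    by (simp add: Nm_def p congr_add congr_scale)
  finally show ?case .
qed

lemma Nm_sym: "Nm \<beta> lag \<eta> $ i $ j = Nm \<beta> lag \<eta> $ j $ i"
proof (induction \<eta>)
  case Nil then show ?case by (simp add: Nm_def)
next
  case (Cons p \<eta>)
  obtain x w where p: "p = (x, w)" by (cases p)
  show ?case using Cons by (simp add: Nm_def p mult.commute)
qed

lemma Nm_psd:
  assumes "\<forall>(x, w) \<in> set \<eta>. 0 \<le> w"
  shows "0 \<le> (\<Sum>i\<in>UNIV. \<Sum>j\<in>UNIV. Nm \<beta> lag \<eta> $i$j * v$i * v$j)"
  using assms
proof (induction \<eta>)
  case Nil then show ?case by (simp add: Nm_def)
next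
  case (Cons p \<eta>)
  obtain x w where p: "p = (x, w)" by (cases p)
  have w0: "0 \<le> w" using Cons.prems p by auto
  have IH: "0 \<le> (\<Sum>i\<in>UNIV. \<Sum>j\<in>UNIV. Nm \<beta> lag \<eta> $i$j * v$i * v$j)" using Cons by auto
  define c where "c = w * intensity \<beta> x"
  have c0: "0 \<le> c" unfolding c_def intensity_def using w0 by simp
  have "(\<Sum>i\<in>UNIV. \<Sum>j\<in>UNIV. Nm \<beta> lag (p # \<eta>) $i$j * v$i * v$j)
      = (\<Sum>i\<in>UNIV. \<Sum>j\<in>UNIV. c * (lag x $ i * v$i) * (lag x $ j * v$j)) + (\<Sum>i\<in>UNIV. \<Sum>j\<in>UNIV. Nm \<beta> lag \<eta> $i$j * v$i * v$j)"
    by (simp add: Nm_def p c_def sum.distrib algebra_simps)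
  also have "(\<Sum>i\<in>UNIV. \<Sum>j\<in>UNIV. c * (lag x $ i * v$i) * (lag x $ j * v$j)) = c * (\<Sum>i\<in>UNIV. lag x $ i * v$i)^2"
  proof -
    have "c * (\<Sum>i\<in>UNIV. lag x $ i * v$i)^2 = c * (\<Sum>i\<in>UNIV. \<Sum>j\<in>UNIV. (lag x $ i * v$i) * (lag x $ j * v$j))"
      by (simp add: power2_eq_square sum_product)
    also have "\<dots> = (\<Sum>i\<in>UNIV. \<Sum>j\<in>UNIV. c * (lag x $ i * v$i) * (lag x $ j * v$j))"
      by (simp add: sum_distrib_left mult.assoc)
    finally show ?thesis by simp
  qed
  finally show ?case using IH c0 by simp
qed

lemma Nm_trace:
  fixes lam :: "4 \<Rightarrow> real"
  assumes sens: "\<And>x. x \<in> X \<Longrightarrow> intensity \<beta> x * (\<Sum>k\<in>UNIV. (lag x $ k)^2 / lam k) \<le> 1"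
    and pts: "\<forall>(x, w) \<in> set \<eta>. x \<in> X \<and> 0 \<le> w"
  shows "(\<Sum>k\<in>UNIV. Nm \<beta> lag \<eta> $k$k / lam k) \<le> sum_list (map snd \<eta>)"
  using pts
proof (induction \<eta>)
  case Nil then show ?case by (simp add: Nm_def)
next
  case (Cons p \<eta>)
  obtain x w where p: "p = (x, w)" by (cases p)
  have w0: "0 \<le> w" and xX: "x \<in> X" using Cons.prems p by auto
  have IH: "(\<Sum>k\<in>UNIV. Nm \<beta> lag \<eta> $k$k / lam k) \<le> sum_list (map snd \<eta>)" using Cons by auto
  have "(\<Sum>k\<in>UNIV. Nm \<beta> lag (p # \<eta>) $k$k / lam k)
     = w * (intensity \<beta> x * (\<Sum>k\<in>UNIV. (lag x $ k)^2 / lam k)) + (\<Sum>k\<in>UNIV. Nm \<beta> lag \<eta> $k$k / lam k)"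
    by (simp add: Nm_def p sum.distrib sum_distrib_left add_divide_distrib power2_eq_square mult.assoc)
  also have "\<dots> \<le> w * 1 + sum_list (map snd \<eta>)"
    using sens[OF xX] w0 IH by (intro add_mono mult_left_mono) auto
  finally show ?case by (simp add: p)
qed

lemma Nm_diag_nonneg:
  assumes "\<forall>(x, w) \<in> set \<eta>. 0 \<le> w"
  shows "0 \<le> Nm \<beta> lag \<eta> $ k $ k"
  using assms
proof (induction \<eta>)
  case Nil then show ?case by (simp add: Nm_def)
next
  case (Cons p \<eta>)
  obtain x w where p: "p = (x, w)" by (cases p)
  have w0: "0 \<le> w" using Cons.prems p by auto
  have IH: "0 \<le> Nm \<beta> lag \<eta> $ k $ k" using Cons by auto
  have "Nm \<beta> lag (p # \<eta>) $ k $ k = (w * intensity \<beta> x) * (lag x $ k * lag x $ k) + Nm \<beta> lag \<eta> $ k $ k"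
    by (simp add: Nm_def p)
  moreover have "0 \<le> (w * intensity \<beta> x) * (lag x $ k * lag x $ k)"
    using w0 unfolding intensity_def by simp
  ultimately show ?case using IH by simp
qed

theorem theorem3:
  fixes \<beta>0 \<beta>1 \<beta>2 \<beta>12 :: real
  assumes "\<beta>1 < 0" and "\<beta>2 < 0" and "\<beta>12 \<le> 0"
  defines "\<rho> \<equiv> - \<beta>12 / (\<beta>1 * \<beta>2)"
  defines "t \<equiv> (if \<beta>12 < 0 then (sqrt (1 + 8 * \<rho>) - 1) / (2 * \<rho>) else 2)"
  shows "locally_D_optimal (vector [\<beta>0, \<beta>1, \<beta>2, \<beta>12]) ({0..} \<times> {0..})
           [((0, 0), 1/4), ((2 / \<bar>\<beta>1\<bar>, 0), 1/4), ((0, 2 / \<bar>\<beta>2\<bar>), 1/4),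
            ((t / \<bar>\<beta>1\<bar>, t / \<bar>\<beta>2\<bar>), 1/4)]"
proof -
  note b1n = assms(1) and b2n = assms(2) and b12 = assms(3)
  define b1 where "b1 = \<bar>\<beta>1\<bar>"
  define b2 where "b2 = \<bar>\<beta>2\<bar>"
  have b1e: "b1 = - \<beta>1" and b1p: "0 < b1" unfolding b1_def using b1n by auto
  have b2e: "b2 = - \<beta>2" and b2p: "0 < b2" unfolding b2_def using b2n by auto
  have bb: "\<beta>1 * \<beta>2 = b1 * b2" using b1e b2e by simp
  have bbp: "0 < \<beta>1 * \<beta>2" using bb b1p b2p by simp
  have \<rho>0: "0 \<le> \<rho>" unfolding \<rho>_def using b12 bbp by (simp add: divide_nonpos_pos)
  have b12e: "\<beta>12 = - \<rho> * (b1 * b2)" unfolding \<rho>_def using bbp bb b1p b2p by simp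
  have tfacts: "0 < t \<and> \<rho> * t^2 + t = 2"
  proof (cases "\<beta>12 < 0")
    case True
    then have \<rho>p: "0 < \<rho>" unfolding \<rho>_def using bbp by (simp add: divide_neg_pos)
    define s where "s = sqrt (1 + 8 * \<rho>)"
    have s1: "1 < s" unfolding s_def using \<rho>p by simp
    have s2: "s^2 = 1 + 8 * \<rho>" unfolding s_def using \<rho>p by simp
    have te: "t = (s - 1) / (2 * \<rho>)" unfolding t_def s_def using True by simp
    have "0 < t" unfolding te using s1 \<rho>p by simp
    moreover have "\<rho> * t^2 + t = 2"
    proof -
      have "\<rho> * t^2 + t = ((s-1)^2 + 2*(s-1)) / (4*\<rho>)" unfolding te using \<rho>p
        by (simp add: field_simps power2_eq_square)
      also have "(s-1)^2 + 2*(s-1) = s^2 - 1" by (simp add: power2_eq_square algebra_simps)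
      also have "\<dots> = 8 * \<rho>" using s2 by simp
      finally show ?thesis using \<rho>p by simp
    qed
    ultimately show ?thesis by simp
  next
    case False
    then have "\<beta>12 = 0" using b12 by simp
    then have "\<rho> = 0" unfolding \<rho>_def by simp
    moreover have "t = 2" unfolding t_def using False by simp
    ultimately show ?thesis by simp
  qed
  have t0: "0 < t" and \<rho>t: "\<rho> * t^2 + t = 2" using tfacts by auto
  have t2: "t \<le> 2" using \<rho>t \<rho>0 by (smt (verit) mult_nonneg_nonneg zero_le_power2)
  have \<rho>e: "\<rho> = (2 - t) / t^2" using \<rho>t t0 by (simp add: field_simps)
  define \<beta> where "\<beta> = (vector [\<beta>0, \<beta>1, \<beta>2, \<beta>12] :: real^4)"
  define X where "X = ({0..} \<times> {0..} :: (real \<times> real) set)"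
  define l0 where "l0 u w = 1 - u/2 - w/2 + (t-1)*u*w/t^2" for u w :: real
  define l1 where "l1 u w = u*(t-w)/(2*t)" for u w :: real
  define l2 where "l2 u w = w*(t-u)/(2*t)" for u w :: real
  define l3 where "l3 u w = u*w/t^2" for u w :: real
  define lag where "lag y = (vector [l0 (b1 * fst y) (b2 * snd y), l1 (b1 * fst y) (b2 * snd y),
      l2 (b1 * fst y) (b2 * snd y), l3 (b1 * fst y) (b2 * snd y)] :: real^4)" for y :: "real \<times> real"
  define F where "F = (vector [regf (0,0), regf (2/b1, 0), regf (0, 2/b2), regf (t/b1, t/b2)] :: real^4^4)"
  have regf_c: "regf y $ 1 = 1" "regf y $ 2 = fst y" "regf y $ 3 = snd y" "regf y $ 4 = fst y * snd y" for y
    unfolding regf_def by simp_all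
  have interp: "regf y $ a = (\<Sum>k\<in>UNIV. F$k$a * lag y $ k)" for y a
  proof -
    have "a = 1 \<or> a = 2 \<or> a = 3 \<or> a = 4" by (rule exhaust_4)
    then show ?thesis
      unfolding sum_4 F_def lag_def l0_def l1_def l2_def l3_def using b1p b2p t0
      by (auto simp: regf_c field_simps power2_eq_square)
  qed
  have inten: "intensity \<beta> y = exp (\<beta>0 - (b1 * fst y + b2 * snd y + \<rho> * (b1 * fst y) * (b2 * snd y)))" for y
    unfolding intensity_def \<beta>_def inner_vec_def sum_4
    by (simp add: regf_c b1e b2e b12e algebra_simps)
  define lam where "lam k = (vector [exp \<beta>0, exp (\<beta>0 - 2), exp (\<beta>0 - 2), exp (\<beta>0 - (t + 2))] :: real^4) $ k" for k :: 4
  have lam_pos: "0 < lam k" for k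
  proof -
    have "k = 1 \<or> k = 2 \<or> k = 3 \<or> k = 4" by (rule exhaust_4)
    then show ?thesis unfolding lam_def by auto
  qed
  have lam_pts: "intensity \<beta> (0,0) = lam 1" "intensity \<beta> (2/b1, 0) = lam 2"
      "intensity \<beta> (0, 2/b2) = lam 3" "intensity \<beta> (t/b1, t/b2) = lam 4"
  proof -
    show "intensity \<beta> (0,0) = lam 1" unfolding inten lam_def by simp
    show "intensity \<beta> (2/b1, 0) = lam 2" unfolding inten lam_def using b1p by simp
    show "intensity \<beta> (0, 2/b2) = lam 3" unfolding inten lam_def using b2p by simp
    have "b1 * (t/b1) + b2 * (t/b2) + \<rho> * (b1 * (t/b1)) * (b2 * (t/b2)) = t + 2"
      using b1p b2p \<rho>t by (simp add: power2_eq_square)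
    then show "intensity \<beta> (t/b1, t/b2) = lam 4" unfolding inten lam_def by simp
  qed
  have sensX: "intensity \<beta> y * (\<Sum>k\<in>UNIV. (lag y $ k)^2 / lam k) \<le> 1" if yX: "y \<in> X" for y
  proof -
    define u where "u = b1 * fst y"
    define w where "w = b2 * snd y"
    have u0: "0 \<le> u" unfolding u_def using yX b1p unfolding X_def by auto
    have w0: "0 \<le> w" unfolding w_def using yX b2p unfolding X_def by auto
    define \<eta> where "\<eta> = u + w + \<rho> * u * w"
    define Q where "Q = (l0 u w)^2 + exp 2 * (l1 u w)^2 + exp 2 * (l2 u w)^2 + exp (t+2) * (l3 u w)^2"
    have Qle: "Q \<le> exp \<eta>"
      using sens[OF u0 w0 t0 t2] unfolding Q_def \<eta>_def l0_def l1_def l2_def l3_def \<rho>e .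
    have E1: "exp (\<beta>0 - \<eta>) / exp \<beta>0 = exp (- \<eta>)" by (simp add: exp_diff[symmetric])
    have E2: "exp (\<beta>0 - \<eta>) / exp (\<beta>0 - 2) = exp 2 * exp (- \<eta>)"
      by (simp add: exp_diff[symmetric] exp_add[symmetric])
    have E3: "exp (\<beta>0 - \<eta>) / exp (\<beta>0 - (t+2)) = exp (t+2) * exp (- \<eta>)"
      by (simp add: exp_diff[symmetric] exp_add[symmetric])
    have "intensity \<beta> y * (\<Sum>k\<in>UNIV. (lag y $ k)^2 / lam k)
        = (l0 u w)^2 * (exp (\<beta>0 - \<eta>) / exp \<beta>0) + (l1 u w)^2 * (exp (\<beta>0 - \<eta>) / exp (\<beta>0 - 2))
          + (l2 u w)^2 * (exp (\<beta>0 - \<eta>) / exp (\<beta>0 - 2)) + (l3 u w)^2 * (exp (\<beta>0 - \<eta>) / exp (\<beta>0 - (t+2)))"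
      unfolding inten sum_4 lam_def lag_def u_def[symmetric] w_def[symmetric] \<eta>_def[symmetric]
      by (simp add: algebra_simps)
    also have "\<dots> = exp (- \<eta>) * Q" unfolding E1 E2 E3 Q_def by (simp add: algebra_simps)
    also have "\<dots> \<le> exp (- \<eta>) * exp \<eta>" using Qle by (intro mult_left_mono) auto
    also have "\<dots> = 1" by (simp add: exp_add[symmetric])
    finally show ?thesis .
  qed
  define \<xi> where "\<xi> = [((0::real, 0::real), 1/4::real), ((2 / \<bar>\<beta>1\<bar>, 0), 1/4), ((0, 2 / \<bar>\<beta>2\<bar>), 1/4),
            ((t / \<bar>\<beta>1\<bar>, t / \<bar>\<beta>2\<bar>), 1/4)]"
  have \<xi>b: "\<xi> = [((0, 0), 1/4), ((2 / b1, 0), 1/4), ((0, 2 / b2), 1/4), ((t / b1, t / b2), 1/4)]"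
    unfolding \<xi>_def b1_def b2_def ..
  have des\<xi>: "is_design X \<xi>"
    unfolding is_design_def \<xi>b X_def using b1p b2p t0 by auto
  have lagpts: "lag (0,0) = vector [1,0,0,0]" "lag (2/b1, 0) = vector [0,1,0,0]"
    "lag (0, 2/b2) = vector [0,0,1,0]" "lag (t/b1, t/b2) = vector [0,0,0,1]"
    unfolding lag_def l0_def l1_def l2_def l3_def using b1p b2p t0
    by (simp_all add: field_simps power2_eq_square)
  have detF: "det (info_matrix \<beta> e) = det F * det F * det (Nm \<beta> lag e)" for e
    unfolding info_eq[of F lag, OF interp] det_mul det_transpose by simp
  have detNxi: "det (Nm \<beta> lag \<xi>) = (lam 1/4) * (lam 2/4) * (lam 3/4) * (lam 4/4)"
    unfolding det_4 Nm_def \<xi>b using lagpts lam_pts by simp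
  have main: "det (info_matrix \<beta> e) \<le> det (info_matrix \<beta> \<xi>)" if de: "is_design X e" for e
  proof -
    have pts: "\<forall>(x, w) \<in> set e. x \<in> X \<and> 0 \<le> w" and sw: "sum_list (map snd e) = 1"
      using de unfolding is_design_def by auto
    have ws: "\<forall>(x, w) \<in> set e. 0 \<le> w" using pts by auto
    let ?N = "Nm \<beta> lag e"
    have h: "det ?N \<le> ?N$1$1 * ?N$2$2 * ?N$3$3 * ?N$4$4"
      by (rule hadamard_mat) (auto intro: Nm_sym Nm_psd[OF ws])
    have tr: "(\<Sum>k\<in>UNIV. ?N$k$k / lam k) \<le> 1"
      using Nm_trace[of X \<beta> lag lam e, OF sensX pts] sw unfolding X_def by simp
    define d where "d k = ?N$k$k / lam k" for k
    have d0: "0 \<le> d k" for k unfolding d_def by (intro divide_nonneg_pos Nm_diag_nonneg[OF ws] lam_pos)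
    have Nd: "?N$k$k = lam k * d k" for k unfolding d_def using lam_pos[of k] by simp
    have sd: "d 1 + d 2 + d 3 + d 4 \<le> 1" using tr unfolding sum_4 d_def .
    have "d 1 * d 2 * d 3 * d 4 \<le> ((d 1 + d 2 + d 3 + d 4)/4)^4" by (rule amgm4) (simp_all add: d0)
    also have "\<dots> \<le> (1/4)^4" using sd d0 by (intro power_mono) (auto intro: add_nonneg_nonneg)
    finally have pd: "d 1 * d 2 * d 3 * d 4 \<le> (1/4)^4" .
    have "det ?N \<le> (lam 1 * lam 2 * lam 3 * lam 4) * (d 1 * d 2 * d 3 * d 4)"
      using h unfolding Nd by (simp add: mult_ac)
    also have "\<dots> \<le> (lam 1 * lam 2 * lam 3 * lam 4) * (1/4)^4"
      using pd lam_pos by (intro mult_left_mono) (auto intro: mult_nonneg_nonneg less_imp_le)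
    also have "\<dots> = det (Nm \<beta> lag \<xi>)" unfolding detNxi by (simp add: power4_eq_xxxx)
    finally have "det ?N \<le> det (Nm \<beta> lag \<xi>)" .
    then have "det F * det F * det ?N \<le> det F * det F * det (Nm \<beta> lag \<xi>)"
      by (intro mult_left_mono) auto
    then show ?thesis unfolding detF .
  qed
  show ?thesis
    unfolding locally_D_optimal_def \<beta>_def[symmetric] \<xi>_def[symmetric] X_def[symmetric]
    using des\<xi> main by blast
qed

end
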